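(* Let $A$ be a complex square matrix, $y$ a complex vector, and $k\ge 1$ an integer. Suppose there is a polynomial $P(X)=c_1X+c_2X^2+\cdots+c_kX^k$ of degree at most $k$ with $P(0)=0$ such that the Hermitian part $H=\tfrac12\big(P(A)^*+P(A)\big)$ of $P(A)$ is positive definite or negative definite. Let $$\rho=\sqrt{1-\left[\frac{\min|\lambda(H)|}{\|P(A)\|_2}\right]^2}.$$ Then $\rho<1$, and for every vector $x_n$ the affine space $$x_n+\operatorname{span}\{r_n,\;Ar_n,\;A^2r_n,\;\ldots,\;A^{k-1}r_n\}$$ contains a vector $x_{n+1}$ with $\|r_{n+1}\|_2\le \rho\,\|r_n\|_2$. The same affine space also contains a vector $x_{n+1}$ (in general a different one) with $\|e_{n+1}\|_2\le\rho\,\|e_n\|_2$.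
   Context: For a vector $x_j$, its residual is $r_j=y-Ax_j$ and its error is $e_j=x_*-x_j$, where $x_*$ is the exact solution of $Ax=y$ (under the hypothesis, $P(A)=A(c_1I+c_2A+\cdots+c_kA^{k-1})$ is nonsingular, so $A$ is nonsingular). $\lambda(H)$ denotes the set of eigenvalues of $H$, so $\min|\lambda(H)|$ is the smallest absolute value of an eigenvalue of $H$. $\|\cdot\|_2$ is the Euclidean vector norm and the induced matrix norm; $M^*$ is the conjugate transpose. *)

theory Defs
  imports "HOL-Analysis.Analysis"
begin

text \<open>Complex n x n matrices are represented as complex ^'n ^'n; the Euclidean
vector norm is the library norm on complex ^'n, and the induced 2-norm of a
matrix M is onorm (\<lambda>x. M *v x).\<close>

primrec matpow :: "complex ^'n ^'n \<Rightarrow> nat \<Rightarrow> complex ^'n ^'n" where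
  "matpow M 0 = mat 1"
| "matpow M (Suc j) = M ** matpow M j"

definition mat_scale :: "complex \<Rightarrow> complex ^'n ^'m \<Rightarrow> complex ^'n ^'m" where
  "mat_scale a M = (\<chi> i j. a * M $ i $ j)"

definition conj_transpose :: "complex ^'n ^'m \<Rightarrow> complex ^'m ^'n" where
  "conj_transpose M = (\<chi> i j. cnj (M $ j $ i))"

definition cinner :: "complex ^'n \<Rightarrow> complex ^'n \<Rightarrow> complex" where
  "cinner x y = (\<Sum>i\<in>UNIV. cnj (x $ i) * y $ i)"

definition matrix_2norm :: "complex ^'n ^'m \<Rightarrow> real" where
  "matrix_2norm M = onorm (\<lambda>x. M *v x)"

definition pos_definite :: "complex ^'n ^'n \<Rightarrow> bool" where
  "pos_definite H \<longleftrightarrow> (\<forall>x. x \<noteq> 0 \<longrightarrow> cinner x (H *v x) \<in> \<real> \<and> Re (cinner x (H *v x)) > 0)"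

definition neg_definite :: "complex ^'n ^'n \<Rightarrow> bool" where
  "neg_definite H \<longleftrightarrow> pos_definite (- H)"

definition eigenvalues :: "complex ^'n ^'n \<Rightarrow> complex set" where
  "eigenvalues M = {l. \<exists>v. v \<noteq> 0 \<and> M *v v = l *s v}"

definition min_abs_eig :: "complex ^'n ^'n \<Rightarrow> real" where
  "min_abs_eig M = Min (norm ` eigenvalues M)"

end

theory Submission imports Defs begin

lemma inner_cinner: "inner x y = Re (cinner x y)"
  by (simp add: inner_vec_def cinner_def inner_complex_def Re_sum)

lemma scaleC_real: "(complex_of_real a) *s (v::complex^'n) = a *\<^sub>R v"
  by (simp add: vec_eq_iff) (simp add: scaleR_conv_of_real)

lemma cinner_ct: "cinner x (conj_transpose M *v y) = cinner (M *v x) y"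
proof -
  have "cinner x (conj_transpose M *v y) = (\<Sum>i\<in>UNIV. \<Sum>j\<in>UNIV. cnj (x$i) * (cnj (M$j$i) * y$j))"
    unfolding cinner_def conj_transpose_def matrix_vector_mult_def
    by (simp add: sum_distrib_left)
  also have "... = (\<Sum>j\<in>UNIV. \<Sum>i\<in>UNIV. cnj (x$i) * (cnj (M$j$i) * y$j))"
    by (rule sum.swap)
  also have "... = cinner (M *v x) y"
    unfolding cinner_def matrix_vector_mult_def
    by (simp add: sum_distrib_left sum_distrib_right cnj_sum mult_ac)
  finally show ?thesis .
qed

lemma inner_ct: "inner x (conj_transpose M *v y) = inner (M *v x) y"
  by (simp add: inner_cinner cinner_ct)

lemma mat_scale_mv: "mat_scale a M *v x = a *s (M *v x)"
  by (simp add: mat_scale_def matrix_vector_mult_def vec_eq_iff sum_distrib_left mult_ac)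

lemma sum_mv: "(\<Sum>j\<in>S. M j) *v x = (\<Sum>j\<in>S. M j *v x)"
  by (induction S rule: infinite_finite_induct) (auto simp: matrix_vector_mult_add_rdistrib)

lemma mv_scale: "(M::complex^'n^'m) *v (a *s x) = a *s (M *v x)"
  by (simp add: matrix_vector_mult_def vec_eq_iff sum_distrib_left mult_ac)

lemma mv_scaleR: "(M::complex^'n^'m) *v (a *\<^sub>R x) = a *\<^sub>R (M *v x)"
  by (metis mv_scale scaleC_real)

lemma matpow_comm: "matpow A j ** A = A ** matpow A j"
proof (induction j)
  case (Suc j) then show ?case by (simp add: matrix_mul_assoc[symmetric])
qed simp

lemma matpow_suc_mv: "matpow A (Suc j) *v x = matpow A j *v (A *v x)"
  by (simp add: matrix_vector_mul_assoc matpow_comm)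

lemma cinner_self: "cinner v v = complex_of_real ((norm v)^2)"
proof (rule complex_eqI)
  show "Re (cinner v v) = Re (complex_of_real ((norm v)^2))"
    by (simp add: inner_cinner[symmetric] power2_norm_eq_inner)
  show "Im (cinner v v) = Im (complex_of_real ((norm v)^2))"
    by (simp add: cinner_def Im_sum)
qed

lemma quad_zero:
  fixes b c :: real
  assumes "\<forall>t. 0 \<le> 2*t*b + t^2*c" and "b \<ge> 0"
  shows "b = 0"
proof (rule ccontr)
  assume "b \<noteq> 0" hence bp: "b > 0" using assms(2) by simp
  define s where "s = 1/(abs c + 1)"
  have sp: "s > 0" and s1: "s * abs c < 1" by (auto simp: s_def field_simps)
  have h0: "0 \<le> 2*(-s*b)*b + (-s*b)^2*c" using assms(1) by blast
  have h1a: "(-s*b)^2 = (s*b)^2" by (simp add: power2_eq_square)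
  have h1: "(s*b)^2*c \<le> (s*b)^2 * abs c"
    by (rule mult_left_mono) simp_all
  have h0': "0 \<le> 2*(-s*b)*b + (s*b)^2*c" using h0 unfolding h1a .
  have h2: "2*(-s*b)*b + (s*b)^2 * abs c = s*b^2*(s*abs c - 2)"
    by (simp add: algebra_simps power2_eq_square)
  have h3: "s*b^2*(s*abs c - 2) < 0" using sp bp s1 by (simp add: mult_pos_neg)
  show False using h0' h1 h2 h3 by linarith
qed

lemma eig_real:
  assumes pd: "pos_definite H" and v: "v \<noteq> 0" "H *v v = l *s v"
  shows "l = complex_of_real (Re l) \<and> Re l > 0"
proof -
  have "cinner v (H *v v) = l * cinner v v"
    using v by (simp add: cinner_def sum_distrib_left mult_ac)
  hence e: "cinner v (H *v v) = l * complex_of_real ((norm v)^2)" by (simp add: cinner_self)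
  have n: "(norm v)^2 > 0" using v by simp
  have r: "cinner v (H *v v) \<in> \<real>" and p: "Re (cinner v (H *v v)) > 0"
    using pd v unfolding pos_definite_def by auto
  from r obtain a where a: "cinner v (H *v v) = complex_of_real a" by (auto elim: Reals_cases)
  have "l = complex_of_real (a / (norm v)^2)" using e a n
    by (simp add: field_simps)
  moreover have "a > 0" using p a by simp
  ultimately have "Re l = a / (norm v)^2" "a / (norm v)^2 > 0" using n by simp_all
  moreover have "l = complex_of_real (Re l)" using \<open>l = complex_of_real (a / (norm v)^2)\<close> by simp
  ultimately show ?thesis by simp
qed


lemma core:
  fixes P :: "complex^'n^'n"
  defines "H \<equiv> mat_scale (1/2) (conj_transpose P + P)"
  assumes pd: "pos_definite H"
  shows "0 < min_abs_eig H \<and> min_abs_eig H \<le> matrix_2norm P \<and>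
    (\<forall>r. \<exists>\<alpha>::real. norm (r - \<alpha> *\<^sub>R (P *v r)) \<le> sqrt (1 - (min_abs_eig H / matrix_2norm P)^2) * norm r)"
proof -
  have Hv: "H *v x = (1/2) *\<^sub>R (conj_transpose P *v x + P *v x)" for x
    unfolding H_def mat_scale_mv matrix_vector_mult_add_rdistrib
    by (metis of_real_divide of_real_1 of_real_numeral scaleC_real)
  have Hsym: "inner x (H *v y) = inner (H *v x) y" for x y
    by (simp add: Hv inner_add_left inner_add_right inner_ct inner_commute)
  have HP: "inner x (H *v x) = inner x (P *v x)" for x
    by (simp add: Hv inner_add_left inner_add_right inner_ct inner_commute)
  define q where "q x = inner x (H *v x)" for x
  have qpos: "x \<noteq> 0 \<Longrightarrow> q x > 0" for x
    using pd unfolding pos_definite_def q_def by (simp add: inner_cinner)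
  have cont: "continuous_on (sphere 0 1) q"
    unfolding q_def by (intro continuous_intros linear_continuous_on bounded_linear.linear) simp
  have ne: "sphere (0::complex^'n) 1 \<noteq> {}" by simp
  obtain x0 where x0s: "x0 \<in> sphere 0 1" and x0min: "\<forall>y\<in>sphere 0 1. q x0 \<le> q y"
    using continuous_attains_inf[OF compact_sphere ne cont] by blast
  have nx0: "norm x0 = 1" using x0s by simp
  hence x0nz: "x0 \<noteq> 0" by auto
  define m where "m = q x0"
  have mpos: "m > 0" using qpos x0nz m_def by simp
  have qscale: "q (a *\<^sub>R x) = a^2 * q x" for a x
    by (simp add: q_def mv_scaleR power2_eq_square)
  have qge: "q x \<ge> m * (norm x)^2" for x
  proof (cases "x = 0")
    case True then show ?thesis by (simp add: q_def)
  next
    case False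
    define u where "u = (1 / norm x) *\<^sub>R x"
    have "norm u = 1" using False by (simp add: u_def)
    hence "m \<le> q u" using x0min m_def by simp
    moreover have "x = norm x *\<^sub>R u" using False by (simp add: u_def)
    hence "q x = (norm x)^2 * q u" by (metis qscale)
    ultimately show ?thesis using mult_right_mono[of m "q u" "(norm x)^2"] by (simp add: mult.commute)
  qed
  define w where "w = H *v x0 - m *\<^sub>R x0"
  have quad: "0 \<le> 2*t*(norm w)^2 + t^2*(q w - m*(norm w)^2)" for t
  proof -
    have "q (x0 + t *\<^sub>R w) - m * (norm (x0 + t *\<^sub>R w))^2 \<ge> 0" using qge[of "x0 + t *\<^sub>R w"] by simp
    moreover have "q (x0 + t *\<^sub>R w) = q x0 + 2 * t * inner w (H *v x0) + t^2 * q w"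
      unfolding q_def using Hsym[of x0 w]
      by (simp add: mv_scaleR matrix_vector_right_distrib inner_add_left inner_add_right inner_commute power2_eq_square algebra_simps)
    moreover have "(norm (x0 + t *\<^sub>R w))^2 = 1 + 2 * t * inner w x0 + t^2 * (norm w)^2"
    proof -
      have "inner x0 x0 = 1" using nx0 by (simp add: power2_norm_eq_inner[symmetric])
      moreover have "inner w w = (norm w)^2" by (simp add: power2_norm_eq_inner)
      ultimately show ?thesis unfolding power2_norm_eq_inner[of "x0 + t *\<^sub>R w"]
        by (simp add: inner_add_left inner_add_right inner_commute algebra_simps power2_eq_square)
    qed
    moreover have "inner w (H *v x0) - m * inner w x0 = (norm w)^2"
      by (simp add: w_def power2_norm_eq_inner inner_diff_right inner_diff_left)
    ultimately show ?thesis unfolding m_def by (simp add: algebra_simps power2_eq_square) 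
  qed
  have "(norm w)^2 = 0" by (rule quad_zero) (use quad in auto)
  hence "w = 0" by simp
  hence eigm: "H *v x0 = complex_of_real m *s x0" by (simp add: w_def scaleC_real)
  let ?E = "eigenvalues H"
  have mE: "complex_of_real m \<in> ?E" unfolding eigenvalues_def using eigm x0nz by blast
  have Ereal: "l \<in> ?E \<Longrightarrow> l = complex_of_real (Re l) \<and> Re l > 0" for l
    unfolding eigenvalues_def using eig_real[OF pd] by blast
  define f where "f l = (SOME v. v \<noteq> 0 \<and> H *v v = l *s v)" for l
  have f: "l \<in> ?E \<Longrightarrow> f l \<noteq> 0 \<and> H *v f l = l *s f l" for l
    unfolding f_def eigenvalues_def by (rule someI_ex) auto
  have orth: "l \<in> ?E \<Longrightarrow> l' \<in> ?E \<Longrightarrow> l \<noteq> l' \<Longrightarrow> inner (f l) (f l') = 0" for l l'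
  proof -
    assume l: "l \<in> ?E" and l': "l' \<in> ?E" and ne: "l \<noteq> l'"
    have a: "H *v f l = Re l *\<^sub>R f l" using f[OF l] Ereal[OF l] by (metis scaleC_real)
    have b: "H *v f l' = Re l' *\<^sub>R f l'" using f[OF l'] Ereal[OF l'] by (metis scaleC_real)
    have "Re l' * inner (f l) (f l') = Re l * inner (f l) (f l')"
      using Hsym[of "f l" "f l'"] by (simp add: a b)
    moreover have "Re l \<noteq> Re l'" using Ereal[OF l] Ereal[OF l'] ne by metis
    ultimately show ?thesis by simp
  qed
  have inj: "inj_on f ?E"
  proof (rule inj_onI)
    fix l l' assume l: "l \<in> ?E" and l': "l' \<in> ?E" and eq: "f l = f l'"
    have e1: "H *v f l = l *s f l" using f[OF l] by blast
    have e2: "H *v f l' = l' *s f l'" using f[OF l'] by blast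
    have e: "l *s f l = l' *s f l" using e1 e2 eq by metis
    obtain i where i: "f l $ i \<noteq> 0" using f[OF l] by (auto simp: vec_eq_iff)
    have "l * f l $ i = l' * f l $ i" using arg_cong[OF e, of "\<lambda>v. v $ i"] by simp
    thus "l = l'" using i by simp
  qed
  have "pairwise orthogonal (f ` ?E)"
    unfolding pairwise_def orthogonal_def
  proof (intro ballI impI)
    fix a b assume "a \<in> f ` ?E" "b \<in> f ` ?E" "a \<noteq> b"
    then obtain l l' where "l \<in> ?E" "l' \<in> ?E" "a = f l" "b = f l'" "l \<noteq> l'" by blast
    thus "inner a b = 0" using orth by blast
  qed
  hence "finite (f ` ?E)" by (rule pairwise_orthogonal_imp_finite)
  hence finE: "finite ?E" using inj finite_imageD by blast
  define \<mu> where "\<mu> = min_abs_eig H"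
  have mule: "\<mu> \<le> m" unfolding \<mu>_def min_abs_eig_def using finE mE mpos
    by (metis (no_types, lifting) Min_le finite_imageI image_eqI norm_of_real abs_of_pos)
  have mupos: "\<mu> > 0" unfolding \<mu>_def min_abs_eig_def using finE mE
  proof (subst Min_gr_iff)
    show "\<forall>a\<in>norm ` ?E. 0 < a" using Ereal by (metis imageE norm_of_real abs_of_pos)
  qed auto
  define N where "N = matrix_2norm P"
  have bl: "bounded_linear (\<lambda>x. P *v x)" by simp
  have Nb: "norm (P *v x) \<le> N * norm x" for x
    unfolding N_def matrix_2norm_def using onorm[OF bl] by simp
  have qP: "q x = inner x (P *v x)" for x using HP q_def by simp
  have "m \<le> N"
  proof -
    have "m = inner x0 (P *v x0)" using m_def qP by simp
    also have "... \<le> norm x0 * norm (P *v x0)" by (rule norm_cauchy_schwarz)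
    also have "... \<le> N" using Nb[of x0] nx0 by simp
    finally show ?thesis .
  qed
  hence muN: "\<mu> \<le> N" using mule by simp
  have Npos: "N > 0" using mupos muN by simp
  have main: "\<exists>\<alpha>::real. norm (r - \<alpha> *\<^sub>R (P *v r)) \<le> sqrt (1 - (\<mu> / N)^2) * norm r" for r
  proof (cases "r = 0")
    case True then show ?thesis by simp
  next
    case False
    define a where "a = inner r (P *v r)"
    have age: "a \<ge> \<mu> * (norm r)^2" using qge[of r] qP mule a_def
      by (metis mult_right_mono zero_le_power2 order_trans)
    have nr: "norm r > 0" using False by simp
    have apos: "a > 0" using age mupos nr by (smt (verit) mult_pos_pos zero_less_power)
    have Prnz: "P *v r \<noteq> 0" using apos a_def by auto
    define p where "p = norm (P *v r)"
    have pp: "p > 0" using Prnz p_def by simp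
    have pN: "p \<le> N * norm r" using Nb p_def by simp
    define \<alpha> where "\<alpha> = a / p^2"
    have expand: "(norm (r - \<alpha> *\<^sub>R (P *v r)))^2 = (norm r)^2 - a^2 / p^2"
    proof -
      have "(norm (r - \<alpha> *\<^sub>R (P *v r)))^2 = (norm r)^2 - 2*\<alpha>*a + \<alpha>^2 * p^2"
        unfolding a_def p_def power2_norm_eq_inner
        by (simp add: inner_diff_left inner_diff_right inner_commute algebra_simps power2_eq_square)
      also have "... = (norm r)^2 - a^2 / p^2" using pp by (simp add: \<alpha>_def field_simps power2_eq_square)
      finally show ?thesis .
    qed
    have ratio: "\<mu> * norm r / N \<le> a / p"
    proof -
      have "\<mu> * norm r / N = (\<mu> * (norm r)^2) / (N * norm r)" using nr by (simp add: power2_eq_square)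
      also have "... \<le> a / p"
        using age pN pp mupos nr apos by (intro frac_le) auto
      finally show ?thesis .
    qed
    have rat2: "(\<mu> * norm r / N)^2 \<le> (a / p)^2"
      using ratio mupos nr Npos by (intro power_mono) auto
    have nn: "0 \<le> 1 - (\<mu> / N)^2" using muN mupos Npos by (simp add: power_le_one)
    have "(norm (r - \<alpha> *\<^sub>R (P *v r)))^2 \<le> (sqrt (1 - (\<mu> / N)^2) * norm r)^2"
    proof -
      have "(sqrt (1 - (\<mu> / N)^2) * norm r)^2 = (norm r)^2 - (\<mu> * norm r / N)^2"
        using nn by (simp add: power_mult_distrib power_divide algebra_simps)
      thus ?thesis using expand rat2 by (simp add: power_divide)
    qed
    hence "norm (r - \<alpha> *\<^sub>R (P *v r)) \<le> sqrt (1 - (\<mu> / N)^2) * norm r"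
      by (rule power2_le_imp_le) (use nn in simp)
    thus ?thesis by blast
  qed
  show ?thesis using main mupos muN unfolding \<mu>_def N_def by blast
qed


lemma ct_neg: "conj_transpose (- M) = - conj_transpose M"
  by (simp add: conj_transpose_def vec_eq_iff)

lemma ms_neg: "mat_scale a (- M) = - mat_scale a M"
  by (simp add: mat_scale_def vec_eq_iff)

lemma neg_mv: "(- M) *v x = - (M *v (x::complex^'n))"
  by (simp add: matrix_vector_mult_def vec_eq_iff sum_negf)

lemma eig_neg: "eigenvalues (- H) = uminus ` eigenvalues H"
proof -
  have "l \<in> eigenvalues (- H) \<longleftrightarrow> - l \<in> eigenvalues H" for l
  proof -
    have sm: "(-l) *s v = - (l *s v)" for v :: "complex^'a"
      by (simp add: vec_eq_iff)
    have "(- (H *v v) = l *s v) \<longleftrightarrow> (H *v v = (-l) *s v)" for v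
      unfolding sm by (metis minus_minus)
    thus ?thesis unfolding eigenvalues_def neg_mv by simp
  qed
  moreover have "l \<in> uminus ` S \<longleftrightarrow> - l \<in> S" for l :: complex and S
  proof
    assume "l \<in> uminus ` S" then obtain x where "x \<in> S" "l = -x" by blast
    thus "-l \<in> S" by simp
  next
    assume "-l \<in> S" hence "-(-l) \<in> uminus ` S" by (rule imageI)
    thus "l \<in> uminus ` S" by simp
  qed
  ultimately show ?thesis by blast
qed

lemma mae_neg: "min_abs_eig (- H) = min_abs_eig H"
proof -
  have "norm ` eigenvalues (- H) = norm ` eigenvalues H"
    unfolding eig_neg image_image by simp
  thus ?thesis by (simp add: min_abs_eig_def)
qed

lemma m2n_neg: "matrix_2norm (- P) = matrix_2norm (P::complex^'n^'m)"
  unfolding matrix_2norm_def neg_mv by (rule onorm_neg)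

lemma sum_shift: "(\<Sum>j<k. g (Suc j)) = (\<Sum>j\<in>{1..k}. g j)"
  by (induction k) (auto simp: atLeastAtMostSuc_conv add.commute)

lemma mv_sum: "(M::complex^'n^'m) *v (\<Sum>j\<in>S. v j) = (\<Sum>j\<in>S. M *v v j)"
  by (induction S rule: infinite_finite_induct) (auto simp: matrix_vector_right_distrib)

lemma keysum:
  fixes A :: "complex^'n^'n"
  shows "(\<Sum>j<k. (complex_of_real \<alpha> * c (Suc j)) *s (matpow A (Suc j) *v v))
     = \<alpha> *\<^sub>R ((\<Sum>j\<in>{1..k}. mat_scale (c j) (matpow A j)) *v v)"
proof -
  have "(\<Sum>j<k. (complex_of_real \<alpha> * c (Suc j)) *s (matpow A (Suc j) *v v))
     = complex_of_real \<alpha> *s (\<Sum>j<k. c (Suc j) *s (matpow A (Suc j) *v v))"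
    by (simp add: vec_eq_iff sum_distrib_left mult.assoc)
  also have "(\<Sum>j<k. c (Suc j) *s (matpow A (Suc j) *v v)) = (\<Sum>j\<in>{1..k}. c j *s (matpow A j *v v))"
    by (rule sum_shift)
  finally show ?thesis by (simp add: sum_mv mat_scale_mv scaleC_real)
qed

theorem theorem1:
  fixes A :: "complex ^'n ^'n" and y :: "complex ^'n" and k :: nat
    and c :: "nat \<Rightarrow> complex"
  assumes k: "k \<ge> 1"
  defines "PA \<equiv> (\<Sum>j\<in>{1..k}. mat_scale (c j) (matpow A j))"
  defines "H \<equiv> mat_scale (1/2) (conj_transpose PA + PA)"
  assumes def: "pos_definite H \<or> neg_definite H"
  defines "\<rho> \<equiv> sqrt (1 - (min_abs_eig H / matrix_2norm PA)\<^sup>2)"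
  shows "\<rho> < 1 \<and>
    (\<forall>xn :: complex ^'n. \<exists>d :: nat \<Rightarrow> complex.
        let xn1 = xn + (\<Sum>j<k. d j *s (matpow A j *v (y - A *v xn))) in
        norm (y - A *v xn1) \<le> \<rho> * norm (y - A *v xn)) \<and>
    (\<forall>xstar xn :: complex ^'n. A *v xstar = y \<longrightarrow> (\<exists>d :: nat \<Rightarrow> complex.
        let xn1 = xn + (\<Sum>j<k. d j *s (matpow A j *v (y - A *v xn))) in
        norm (xstar - xn1) \<le> \<rho> * norm (xstar - xn)))"
proof -
  have C: "0 < min_abs_eig H \<and> min_abs_eig H \<le> matrix_2norm PA \<and>
    (\<forall>r. \<exists>\<alpha>::real. norm (r - \<alpha> *\<^sub>R (PA *v r)) \<le> \<rho> * norm r)"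
  proof (cases "pos_definite H")
    case True
    then show ?thesis using core[of PA] unfolding H_def \<rho>_def by blast
  next
    case False
    hence nd: "pos_definite (mat_scale (1/2) (conj_transpose (- PA) + - PA))"
      using def unfolding neg_definite_def H_def by (simp add: ct_neg ms_neg[symmetric])
    have eqH: "mat_scale (1/2) (conj_transpose (- PA) + - PA) = - H"
      unfolding H_def by (simp add: ct_neg ms_neg[symmetric])
    have c: "0 < min_abs_eig H \<and> min_abs_eig H \<le> matrix_2norm PA \<and>
      (\<forall>r. \<exists>\<alpha>::real. norm (r - \<alpha> *\<^sub>R ((- PA) *v r)) \<le> \<rho> * norm r)"
      using core[OF nd] unfolding eqH mae_neg m2n_neg \<rho>_def by blast
    have "\<exists>\<alpha>::real. norm (r - \<alpha> *\<^sub>R (PA *v r)) \<le> \<rho> * norm r" for r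
    proof -
      obtain \<alpha> :: real where "norm (r - \<alpha> *\<^sub>R ((- PA) *v r)) \<le> \<rho> * norm r" using c by blast
      hence "norm (r - (- \<alpha>) *\<^sub>R (PA *v r)) \<le> \<rho> * norm r" by (simp add: neg_mv)
      thus ?thesis by blast
    qed
    thus ?thesis using c by blast
  qed
  have r1: "\<rho> < 1"
  proof -
    have "min_abs_eig H / matrix_2norm PA > 0" using C by simp
    hence "(min_abs_eig H / matrix_2norm PA)^2 > 0" by (rule zero_less_power)
    hence "1 - (min_abs_eig H / matrix_2norm PA)^2 < 1" by linarith
    thus ?thesis unfolding \<rho>_def by simp
  qed
  have r2: "\<exists>d :: nat \<Rightarrow> complex.
        let xn1 = xn + (\<Sum>j<k. d j *s (matpow A j *v (y - A *v xn))) in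
        norm (y - A *v xn1) \<le> \<rho> * norm (y - A *v xn)" for xn
  proof -
    define r where "r = y - A *v xn"
    obtain \<alpha> :: real where al: "norm (r - \<alpha> *\<^sub>R (PA *v r)) \<le> \<rho> * norm r" using C by blast
    define d where "d j = complex_of_real \<alpha> * c (Suc j)" for j
    have "A *v (\<Sum>j<k. d j *s (matpow A j *v r)) = (\<Sum>j<k. d j *s (matpow A (Suc j) *v r))"
      by (simp add: mv_sum mv_scale matrix_vector_mul_assoc)
    also have "... = \<alpha> *\<^sub>R (PA *v r)" unfolding d_def PA_def by (rule keysum)
    finally have AG: "A *v (\<Sum>j<k. d j *s (matpow A j *v r)) = \<alpha> *\<^sub>R (PA *v r)" .
    have fin: "y - A *v (xn + (\<Sum>j<k. d j *s (matpow A j *v r))) = r - \<alpha> *\<^sub>R (PA *v r)"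
    proof -
      have "y - A *v (xn + (\<Sum>j<k. d j *s (matpow A j *v r))) = (y - A *v xn) - A *v (\<Sum>j<k. d j *s (matpow A j *v r))"
        by (simp add: matrix_vector_right_distrib)
      also have "... = r - \<alpha> *\<^sub>R (PA *v r)" by (simp only: r_def[symmetric] AG)
      finally show ?thesis .
    qed
    have "norm (y - A *v (xn + (\<Sum>j<k. d j *s (matpow A j *v r)))) \<le> \<rho> * norm r"
      unfolding fin by (rule al)
    hence "let xn1 = xn + (\<Sum>j<k. d j *s (matpow A j *v (y - A *v xn))) in
        norm (y - A *v xn1) \<le> \<rho> * norm (y - A *v xn)"
      unfolding r_def Let_def .
    thus ?thesis by blast
  qed
  have r3: "\<exists>d :: nat \<Rightarrow> complex.
        let xn1 = xn + (\<Sum>j<k. d j *s (matpow A j *v (y - A *v xn))) in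
        norm (xstar - xn1) \<le> \<rho> * norm (xstar - xn)" if xs: "A *v xstar = y" for xstar xn
  proof -
    define e where "e = xstar - xn"
    have ry: "y - A *v xn = A *v e" unfolding e_def using xs by (simp add: matrix_vector_mult_diff_distrib)
    obtain \<alpha> :: real where al: "norm (e - \<alpha> *\<^sub>R (PA *v e)) \<le> \<rho> * norm e" using C by blast
    define d where "d j = complex_of_real \<alpha> * c (Suc j)" for j
    have "(\<Sum>j<k. d j *s (matpow A j *v (A *v e))) = (\<Sum>j<k. d j *s (matpow A (Suc j) *v e))"
      by (simp only: matpow_suc_mv)
    also have "... = \<alpha> *\<^sub>R (PA *v e)" unfolding d_def PA_def by (rule keysum)
    finally have G: "(\<Sum>j<k. d j *s (matpow A j *v (y - A *v xn))) = \<alpha> *\<^sub>R (PA *v e)"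
      unfolding ry .
    have fin: "xstar - (xn + (\<Sum>j<k. d j *s (matpow A j *v (y - A *v xn)))) = e - \<alpha> *\<^sub>R (PA *v e)"
      unfolding G e_def by (simp add: algebra_simps)
    have "norm (xstar - (xn + (\<Sum>j<k. d j *s (matpow A j *v (y - A *v xn))))) \<le> \<rho> * norm (xstar - xn)"
      unfolding fin using al unfolding e_def .
    hence "let xn1 = xn + (\<Sum>j<k. d j *s (matpow A j *v (y - A *v xn))) in
        norm (xstar - xn1) \<le> \<rho> * norm (xstar - xn)"
      unfolding Let_def .
    thus ?thesis by blast
  qed
  show ?thesis using r1 r2 r3 by blast
qed

end
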